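(* Let $s\ge2$, $k\ge1$ and $s_0$ be integers with $0\le s_0<\min\{k,s\}$. Let $n=sk+s_0$, $d_c=\lfloor n/s\rfloor=k$ and $d_o=\lfloor (n-1)/(s-1)\rfloor$, and define $$f(s,k,s_0)=\frac{\gamma_{MBR,c}}{\gamma_{MBR,o}}=\frac{\dfrac{d_c}{kd_c-\lfloor k/2\rfloor\lceil k/2\rceil}}{\dfrac{2d_o}{2kd_o-k^2+k}}.$$ Then $$f(s,k,s_0)\le\frac{2}{3}\cdot\frac{(s+3)k+s-3}{(s+1)k-1}.$$
   Context: $\gamma_{MBR,c}=\frac{d_cM}{kd_c-\lfloor k/2\rfloor\lceil k/2\rceil}$ is the minimum repair bandwidth (functional repair) of the Fixed Cluster Repair System with $s$ clusters, and $\gamma_{MBR,o}=\frac{2d_oM}{2kd_o-k^2+k}$ is the minimum-bandwidth-regenerating repair bandwidth of a standard regenerating code with repair degree $d_o$; the file size $M$ cancels in the ratio. *)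

theory Defs
  imports Complex_Main
begin

text \<open>Repair bandwidth (per unit file size M) of the Fixed Cluster Repair System (MBR, functional repair).\<close>
definition gamma_MBR_c :: "nat \<Rightarrow> nat \<Rightarrow> real" where
  "gamma_MBR_c k dc = real dc / (real k * real dc - real (k div 2) * of_int \<lceil>real k / 2\<rceil>)"

text \<open>MBR repair bandwidth (per unit file size M) of a standard regenerating code with repair degree do.\<close>
definition gamma_MBR_o :: "nat \<Rightarrow> nat \<Rightarrow> real" where
  "gamma_MBR_o k d = 2 * real d / (2 * real k * real d - (real k)^2 + real k)"

definition f_ratio :: "nat \<Rightarrow> nat \<Rightarrow> nat \<Rightarrow> real" where
  "f_ratio s k s0 =
     (let n = s * k + s0; dc = n div s; d = (n - 1) div (s - 1)
      in gamma_MBR_c k dc / gamma_MBR_o k d)"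

end

theory Submission
  imports Defs
begin

lemma q_bound:
  fixes k :: nat
  shows "4 * (real (k div 2) * of_int \<lceil>real k / 2\<rceil>) \<le> (real k)^2"
proof (cases "even k")
  case True
  then obtain m where m: "k = 2*m" by blast
  have "\<lceil>real k / 2\<rceil> = int m" using m by simp
  then show ?thesis using m by (simp add: power2_eq_square)
next
  case False
  then obtain m where m: "k = 2*m+1" using oddE by blast
  have "\<lceil>real k / 2\<rceil> = int m + 1" using m by (simp add: ceiling_eq_iff)
  moreover have "k div 2 = m" using m by simp
  ultimately show ?thesis using m by (simp add: power2_eq_square algebra_simps)
qed

theorem proposition1:
  fixes s k s0 :: nat
  assumes "s \<ge> 2" and "k \<ge> 1" and "s0 < min k s"
  shows "f_ratio s k s0 \<le> 2 / 3 * (((real s + 3) * real k + real s - 3) / ((real s + 1) * real k - 1))"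
proof -
  define d where "d = (s * k + s0 - 1) div (s - 1)"
  have dc: "(s * k + s0) div s = k" using assms by (simp add: div_add1_eq)
  have d1: "d * (s - 1) \<le> s * k + s0 - 1" unfolding d_def by (rule div_times_less_eq_dividend)
  have d2: "s * k + s0 - 1 \<le> s*k + k - 2" using assms by linarith
  have dk: "k \<le> d" unfolding d_def
  proof -
    have "k * (s-1) = s*k - k" by (simp add: algebra_simps diff_mult_distrib2)
    moreover have "s*k \<ge> k" using assms by simp
    ultimately have "k * (s-1) \<le> s*k + s0 - 1" using assms by linarith
    thus "k \<le> (s * k + s0 - 1) div (s - 1)" using assms by (simp add: less_eq_div_iff_mult_less_eq)
  qed
  define D where "D = real d"
  define q where "q = real (k div 2) * of_int \<lceil>real k / 2\<rceil>"
  have q4: "4*q \<le> (real k)^2" unfolding q_def by (rule q_bound)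
  have kpos: "real k \<ge> 1" using assms by simp
  have Dk: "D \<ge> real k" unfolding D_def using dk by simp
  have Dup: "D * (real s - 1) \<le> (real s + 1) * real k - 2"
  proof -
    have "d * (s - 1) \<le> s*k + k - 2" using d1 d2 by linarith
    hence "real (d * (s-1)) \<le> real (s*k + k - 2)" by linarith
    moreover have "real (s*k+k-2) = (real s + 1) * real k - 2"
    proof -
      have "s*k \<ge> 2*1" using assms mult_le_mono by blast
      hence "real (s*k+k-2) = real (s*k+k) - 2" by (simp add: of_nat_diff)
      thus ?thesis by (simp add: algebra_simps)
    qed
    ultimately show ?thesis using assms by (simp add: of_nat_diff D_def)
  qed
  have dd: "\<And>a b c e :: real. a/b/(c/e) = a*e/(b*c)" by simp
  have f: "f_ratio s k s0 = real k * (2 * real k * D - (real k)^2 + real k) / (2 * D * ((real k)^2 - q))"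
    unfolding f_ratio_def Let_def dc gamma_MBR_c_def gamma_MBR_o_def q_def D_def d_def[symmetric]
    by (simp add: power2_eq_square dd)
  define K where "K = real k"
  define S where "S = real s"
  define E where "E = (S + 1) * K - 2"
  define A where "A = (S + 3) * K + S - 3"
  define B where "B = (S + 1) * K - 1"
  define g where "g = 2 * K * D - K^2 + K"
  have K1: "K \<ge> 1" using kpos K_def by simp
  have S2: "S \<ge> 2" using assms S_def by simp
  have DK: "D \<ge> K" using Dk K_def by simp
  have Dp: "D > 0" using DK K1 by linarith
  have gpos: "g > 0"
  proof -
    have "2*K*D \<ge> 2*K*K" using DK K1 by simp
    hence "g \<ge> K*K + K" unfolding g_def by (simp add: power2_eq_square)
    moreover have "K*K > 0" using K1 by simp
    ultimately show ?thesis using K1 by linarith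
  qed
  have den: "K^2 - q \<ge> 3/4 * K^2" using q4 K_def by simp
  have Kp: "3/4*K^2 > 0" using K1 by simp
  have Ep: "E > 0"
  proof -
    have "3*1 \<le> (S+1)*K" using K1 S2 by (intro mult_mono) auto
    thus ?thesis unfolding E_def by simp
  qed
  have Bp: "B > 0" using Ep unfolding E_def B_def by simp
  have AB: "A \<le> 2 * B"
  proof -
    have "(S-1)*1 \<le> (S-1)*K" using K1 S2 by (intro mult_left_mono) auto
    hence "S - 1 \<le> S*K - K" by (simp add: algebra_simps)
    thus ?thesis unfolding A_def B_def by (simp add: algebra_simps)
  qed
  have Kq: "K^2 - q > 0" using den Kp by linarith
  have step1: "K * g / (2 * D * (K^2 - q)) \<le> K * g / (2 * D * (3/4*K^2))"
  proof (rule divide_left_mono)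
    show "2 * D * (3/4*K^2) \<le> 2 * D * (K^2 - q)" using den Dp by (intro mult_left_mono) auto
    show "0 \<le> K * g" using gpos K1 by simp
    show "0 < 2 * D * (K^2 - q) * (2 * D * (3/4*K^2))" using Kq Dp Kp by (intro mult_pos_pos) auto
  qed
  have step2: "K * g / (2 * D * (3/4*K^2)) = 2/3 * (2 - (K - 1) / D)"
    unfolding g_def using Dp K1 by (simp add: field_simps power2_eq_square)
  have step3: "(K - 1) * (S - 1) / E \<le> (K - 1) / D"
  proof -
    have "D * (S - 1) \<le> E" using Dup unfolding E_def S_def K_def D_def by simp
    hence "(K - 1) * (D * (S - 1)) \<le> (K - 1) * E" using K1 by (simp add: mult_left_mono)
    thus ?thesis using Ep Dp by (simp add: field_simps)
  qed
  have step4: "2 - (K - 1) * (S - 1) / E \<le> A / B"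
  proof -
    have e1: "2 - (K - 1) * (S - 1) / E = (A - 2) / E"
      using Ep unfolding A_def E_def by (simp add: field_simps)
    have "(A - 2) * B \<le> A * (B - 1)" using AB by (simp add: algebra_simps)
    hence "(A - 2) / E \<le> A / B" using Ep Bp unfolding E_def B_def
      by (simp add: field_simps)
    thus ?thesis using e1 by simp
  qed
  have "f_ratio s k s0 \<le> 2/3 * (2 - (K - 1) / D)"
  proof -
    have "f_ratio s k s0 = K * g / (2 * D * (K^2 - q))" using f unfolding K_def g_def .
    also have "\<dots> \<le> K * g / (2 * D * (3/4*K^2))" by (rule step1)
    also have "\<dots> = 2/3 * (2 - (K - 1) / D)" by (rule step2)
    finally show ?thesis .
  qed
  also have "\<dots> \<le> 2/3 * (A / B)" proof -
    have "2 - (K - 1) / D \<le> A / B" using step3 step4 by linarith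
    thus ?thesis by (rule mult_left_mono) simp
  qed
  finally show ?thesis unfolding A_def B_def S_def K_def .
qed

end
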